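(* For every integer $n\ge 0$, \[ \int_{\mathbb{Z}_p}\binom{x/2}{n}\,d\mu_q(x)=(-1)^n2^{-2n}d_{n,q}=\frac{1}{n!}\sum_{m=0}^{n}\Big(\frac12\Big)^m B_{m,q}S_1(n,m). \]
   Context: Let $p$ be a fixed odd prime, $\mathbb{Z}_p$ the $p$-adic integers, $\mathbb{C}_p$ the completion of the algebraic closure of $\mathbb{Q}_p$, with $|p|_p=1/p$. Let $q\in\mathbb{C}_p$ with $|1-q|_p<p^{-1/(p-1)}$, $[x]_q=\frac{1-q^x}{1-q}$, and $\log$ the $p$-adic logarithm. For a uniformly differentiable function $f$ on $\mathbb{Z}_p$, the $p$-adic $q$-integral is \[ \int_{\mathbb{Z}_p}f(x)\,d\mu_q(x)=\lim_{N\to\infty}\frac{1}{[p^N]_q}\sum_{x=0}^{p^N-1}f(x)q^x. \] The $q$-Bernoulli numbers $B_{n,q}$ are defined by $\frac{(q-1)+\frac{q-1}{\log q}t}{qe^t-1}=\sum_{n\ge0}B_{n,q}\frac{t^n}{n!}$. The numbers $d_{n,q}$ are defined by \[ \frac{q-1+\frac{q-1}{\log q}\cdot\frac12\log(1-4t)}{q\sqrt{1-4t}-1}=\sum_{n=0}^{\infty}d_{n,q}t^n, \] for $t\in\mathbb{C}_p$ with $|t|_p<p^{-1/(p-1)}$. $S_1(n,m)$ are the Stirling numbers of the first kind: $(x)_n=\sum_{l=0}^n S_1(n,l)x^l$ with $(x)_n=x(x-1)\cdots(x-n+1)$, $(x)_0=1$. Here $\binom{x/2}{n}=\frac{(x/2)_n}{n!}$.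 *)

theory Defs
  imports "HOL-Analysis.Analysis" "HOL-Computational_Algebra.Formal_Power_Series"
    "HOL-Computational_Algebra.Polynomial"
begin

definition vtends :: "('a::field \<Rightarrow> real) \<Rightarrow> (nat \<Rightarrow> 'a) \<Rightarrow> 'a \<Rightarrow> bool" where
  "vtends v s L \<longleftrightarrow> (\<forall>e>0. \<exists>N. \<forall>n\<ge>N. v (s n - L) < e)"

definition vcauchy :: "('a::field \<Rightarrow> real) \<Rightarrow> (nat \<Rightarrow> 'a) \<Rightarrow> bool" where
  "vcauchy v s \<longleftrightarrow> (\<forall>e>0. \<exists>N. \<forall>m\<ge>N. \<forall>n\<ge>N. v (s m - s n) < e)"

(* (K, v) is (isometrically isomorphic to) C_p with |p|_p = 1/p:
   a complete, algebraically closed, non-archimedean valued field with |p| = 1/p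
   in which the elements algebraic over Q are dense.  These properties characterize
   C_p up to isometric isomorphism. *)
definition is_Cp :: "nat \<Rightarrow> ('a::field_char_0 \<Rightarrow> real) \<Rightarrow> bool" where
  "is_Cp p v \<longleftrightarrow>
     (\<forall>x. 0 \<le> v x) \<and> (\<forall>x. v x = 0 \<longleftrightarrow> x = 0) \<and>
     (\<forall>x y. v (x * y) = v x * v y) \<and>
     (\<forall>x y. v (x + y) \<le> max (v x) (v y)) \<and>
     v (of_nat p) = 1 / real p \<and>
     (\<forall>s. vcauchy v s \<longrightarrow> (\<exists>L. vtends v s L)) \<and>
     (\<forall>P :: 'a poly. 0 < degree P \<longrightarrow> (\<exists>x. poly P x = 0)) \<and>
     (\<forall>x e. 0 < e \<longrightarrow> (\<exists>y. v (x - y) < e \<and>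
          (\<exists>P :: rat poly. P \<noteq> 0 \<and> poly (map_poly of_rat P) y = 0)))"

definition plog :: "('a::field_char_0 \<Rightarrow> real) \<Rightarrow> 'a \<Rightarrow> 'a" where
  "plog v q = (THE L. vtends v (\<lambda>N. \<Sum>k=1..N. (-1)^(k+1) * (q - 1)^k / of_nat k) L)"

definition qnum :: "'a::field \<Rightarrow> nat \<Rightarrow> 'a" where
  "qnum q x = (1 - q ^ x) / (1 - q)"

(* the p-adic q-integral of f (values on the nonnegative integers suffice) has value I *)
definition has_q_integral ::
  "nat \<Rightarrow> ('a::field_char_0 \<Rightarrow> real) \<Rightarrow> 'a \<Rightarrow> (nat \<Rightarrow> 'a) \<Rightarrow> 'a \<Rightarrow> bool" where
  "has_q_integral p v q f I \<longleftrightarrow>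
     vtends v (\<lambda>N. (1 / qnum q (p ^ N)) * (\<Sum>x<p ^ N. f x * q ^ x)) I"

definition qBernoulli_gf :: "('a::field_char_0 \<Rightarrow> real) \<Rightarrow> 'a \<Rightarrow> 'a fps" where
  "qBernoulli_gf v q =
     (fps_const (q - 1) + fps_const ((q - 1) / plog v q) * fps_X) /
     (fps_const q * fps_exp 1 - 1)"

definition qBernoulli :: "('a::field_char_0 \<Rightarrow> real) \<Rightarrow> 'a \<Rightarrow> nat \<Rightarrow> 'a" where
  "qBernoulli v q n = fact n * fps_nth (qBernoulli_gf v q) n"

definition sqrt_1m4t :: "'a::field_char_0 fps" where
  "sqrt_1m4t = Abs_fps (\<lambda>k. ((1/2) gchoose k) * (-4) ^ k)"

definition log_1m4t :: "'a::field_char_0 fps" where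
  "log_1m4t = Abs_fps (\<lambda>k. if k = 0 then 0 else - (4 ^ k) / of_nat k)"

definition d_gf :: "('a::field_char_0 \<Rightarrow> real) \<Rightarrow> 'a \<Rightarrow> 'a fps" where
  "d_gf v q =
     (fps_const (q - 1) + fps_const ((q - 1) / plog v q) * fps_const (1/2) * log_1m4t) /
     (fps_const q * sqrt_1m4t - 1)"

definition dq :: "('a::field_char_0 \<Rightarrow> real) \<Rightarrow> 'a \<Rightarrow> nat \<Rightarrow> 'a" where
  "dq v q n = fps_nth (d_gf v q) n"

definition falling_poly :: "nat \<Rightarrow> int poly" where
  "falling_poly n = (\<Prod>i<n. [:- of_nat i, 1:])"

definition Stirling1 :: "nat \<Rightarrow> nat \<Rightarrow> int" where
  "Stirling1 n l = coeff (falling_poly n) l"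

end

theory Submission
  imports Defs
begin


lemma S1_0: "Stirling1 0 m = (if m = 0 then 1 else 0)"
  by (simp add: Stirling1_def falling_poly_def)

lemma falling_poly_Suc: "falling_poly (Suc n) = [:- of_nat n, 1:] * falling_poly n"
  by (simp add: falling_poly_def lessThan_Suc mult.commute)

lemma S1_Suc_0: "Stirling1 (Suc n) 0 = - of_nat n * Stirling1 n 0"
  by (simp add: Stirling1_def falling_poly_Suc)

lemma S1_Suc_Suc: "Stirling1 (Suc n) (Suc m) = Stirling1 n m - of_nat n * Stirling1 n (Suc m)"
  by (simp add: Stirling1_def falling_poly_Suc)

lemma S1_big: "n < m \<Longrightarrow> Stirling1 n m = 0"
proof (induct n arbitrary: m)
  case 0 then show ?case by (simp add: S1_0)
next
  case (Suc n)
  then obtain k where "m = Suc k" "n < k" by (cases m) auto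
  then show ?case using Suc by (simp add: S1_Suc_Suc)
qed

lemma falling_expand:
  "(\<Prod>i<n. (y::'a::field_char_0) - of_nat i) = (\<Sum>m=0..n. of_int (Stirling1 n m) * y ^ m)"
proof (induct n)
  case 0 then show ?case by (simp add: S1_0)
next
  case (Suc n)
  define P where "P = (\<Sum>m=0..n. of_int (Stirling1 n m) * y ^ m)"
  have e1: "(\<Sum>m=0..n. of_int (Stirling1 n (Suc m)) * y ^ Suc m) = P - of_int (Stirling1 n 0)"
  proof -
    have "(\<Sum>m=0..Suc n. of_int (Stirling1 n m) * y ^ m)
       = of_int (Stirling1 n 0) + (\<Sum>m=0..n. of_int (Stirling1 n (Suc m)) * y ^ Suc m)"
      by (subst sum.atLeast0_atMost_Suc_shift) simp
    moreover have "Stirling1 n (Suc n) = 0" by (rule S1_big) simp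
    then have "(\<Sum>m=0..Suc n. of_int (Stirling1 n m) * y ^ m) = P"
      by (simp add: P_def)
    ultimately show ?thesis by (metis add_diff_cancel_left')
  qed
  have "(\<Sum>m=0..Suc n. of_int (Stirling1 (Suc n) m) * y ^ m)
     = of_int (Stirling1 (Suc n) 0) + (\<Sum>m=0..n. of_int (Stirling1 (Suc n) (Suc m)) * y ^ Suc m)"
    by (subst sum.atLeast0_atMost_Suc_shift) simp
  also have "\<dots> = - of_nat n * of_int (Stirling1 n 0)
      + (y * P - of_nat n * (\<Sum>m=0..n. of_int (Stirling1 n (Suc m)) * y ^ Suc m))"
    unfolding S1_Suc_0 S1_Suc_Suc P_def
    by (simp add: algebra_simps sum_subtractf sum_distrib_left)
  also have "\<dots> = (y - of_nat n) * P" unfolding e1 by (simp add: algebra_simps)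
  finally show ?case using Suc by (simp add: P_def lessThan_Suc mult.commute)
qed

lemma gchoose_expand:
  "((y::'a::field_char_0) gchoose n) = (1 / fact n) * (\<Sum>m=0..n. of_int (Stirling1 n m) * y ^ m)"
  unfolding gbinomial_prod_rev falling_expand[symmetric]
  by (simp add: atLeast0LessThan)


lemma S1_n_0: "Stirling1 n 0 = (if n = 0 then 1 else 0)"
  by (induct n) (auto simp: S1_0 S1_Suc_0)

definition uu :: "'a::field_char_0 fps" where
  "uu = fps_const (1/2) * log_1m4t"

lemma uu0: "fps_nth uu 0 = 0"
  by (simp add: uu_def log_1m4t_def)

lemma L14: "fps_nth ((1 - 4 * fps_X) * (W::'a::field_char_0 fps)) n
   = fps_nth W n - 4 * (if n = 0 then 0 else fps_nth W (n - 1))"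
proof -
  have "(1 - 4 * fps_X) * W = W - fps_const 4 * (fps_X * W)"
    by (simp add: algebra_simps numeral_fps_const)
  then show ?thesis by simp
qed

lemma deriv_uu: "(1 - 4 * fps_X) * fps_deriv (uu :: 'a::field_char_0 fps) = fps_const (-2)"
proof -
  have d: "fps_nth (fps_deriv (uu::'a fps)) n = - 2 * 4 ^ n" for n
    by (simp add: uu_def log_1m4t_def del: of_nat_Suc)
  show ?thesis
  proof (rule fps_ext)
    fix n
    show "fps_nth ((1 - 4 * fps_X) * fps_deriv (uu::'a fps)) n = fps_nth (fps_const (-2)) n"
      unfolding L14 d by (cases n) (simp_all add: algebra_simps)
  qed
qed


lemma upow_rel:
  "of_nat (Suc n) * fps_nth ((uu::'a::field_char_0 fps) ^ Suc k) (Suc n)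
     = 4 * of_nat n * fps_nth (uu ^ Suc k) n - 2 * of_nat (Suc k) * fps_nth (uu ^ k) n"
proof -
  have "(1 - 4 * fps_X) * fps_deriv ((uu::'a fps) ^ Suc k)
      = of_nat (Suc k) * uu ^ k * ((1 - 4 * fps_X) * fps_deriv uu)"
  proof -
    have "fps_deriv ((uu::'a fps) ^ Suc k) = of_nat (Suc k) * fps_deriv uu * uu ^ k"
      by (simp only: fps_deriv_power') simp
    then show ?thesis by (simp only: ac_simps)
  qed
  also have "\<dots> = fps_const (- 2 * of_nat (Suc k)) * uu ^ k"
    unfolding deriv_uu fps_of_nat[symmetric] fps_const_mult[symmetric]
    by (simp add: ac_simps)
  finally have e: "(1 - 4 * fps_X) * fps_deriv ((uu::'a fps) ^ Suc k) =
     fps_const (- 2 * of_nat (Suc k)) * uu ^ k" .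
  have "fps_nth ((1 - 4 * fps_X) * fps_deriv ((uu::'a fps) ^ Suc k)) n
      = - 2 * of_nat (Suc k) * fps_nth (uu ^ k) n"
    unfolding e by simp
  then have "fps_nth (fps_deriv ((uu::'a fps) ^ Suc k)) n
       - 4 * (if n = 0 then 0 else fps_nth (fps_deriv ((uu::'a fps) ^ Suc k)) (n - 1))
      = - 2 * of_nat (Suc k) * fps_nth (uu ^ k) n" unfolding L14 .
  moreover obtain U where U: "U = (uu::'a fps) ^ Suc k" by simp
  ultimately have "fps_nth (fps_deriv U) n - 4 * (if n = 0 then 0 else fps_nth (fps_deriv U) (n - 1))
      = - 2 * of_nat (Suc k) * fps_nth (uu ^ k) n" unfolding U by blast
  then have "of_nat (Suc n) * fps_nth U (Suc n) = 4 * of_nat n * fps_nth U n - 2 * of_nat (Suc k) * fps_nth (uu ^ k) n"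
    by (cases n) (simp_all add: algebra_simps)
  then show ?thesis unfolding U .
qed

lemma upow_nth:
  "fps_nth ((uu::'a::field_char_0 fps) ^ m) n
     = fact m * (1/2) ^ m * of_int (Stirling1 n m) * (-4) ^ n / fact n"
proof (induct n arbitrary: m)
  case 0
  then show ?case
    by (cases m) (simp_all add: S1_0 uu0)
next
  case (Suc n)
  show ?case
  proof (cases m)
    case 0
    then show ?thesis by (simp add: S1_n_0)
  next
    case (Suc k)
    define A :: 'a where "A = fact k * (1/2) ^ k * (-4) ^ n / fact n"
    have h1: "fps_nth ((uu::'a fps) ^ Suc k) n = of_nat (Suc k) / 2 * of_int (Stirling1 n (Suc k)) * A"
      unfolding Suc.hyps A_def by (simp add: field_simps)
    have h2: "fps_nth ((uu::'a fps) ^ k) n = of_int (Stirling1 n k) * A"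
      unfolding Suc.hyps A_def by (simp add: field_simps)
    have "of_nat (Suc n) * fps_nth ((uu::'a fps) ^ Suc k) (Suc n)
       = of_nat (Suc n) * (fact (Suc k) * (1/2) ^ Suc k * of_int (Stirling1 (Suc n) (Suc k)) * (-4) ^ Suc n / fact (Suc n))"
    proof -
      have "of_nat (Suc n) * (fact (Suc k) * (1/2) ^ Suc k * of_int (Stirling1 (Suc n) (Suc k)) * (-4) ^ Suc n / fact (Suc n))
         = (-2) * of_nat (Suc k) * of_int (Stirling1 (Suc n) (Suc k)) * A"
      proof -
        have f1: "(fact (Suc n) :: 'a) = of_nat (Suc n) * fact n" by (simp del: of_nat_Suc)
        have f2: "(fact (Suc k) :: 'a) = of_nat (Suc k) * fact k" by (simp del: of_nat_Suc)
        have nz: "(of_nat (Suc n) :: 'a) \<noteq> 0" by (simp del: of_nat_Suc)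
        show ?thesis unfolding A_def f1 f2 power_Suc using nz
          by (simp add: field_simps del: of_nat_Suc)
      qed
      also have "\<dots> = 4 * of_nat n * (of_nat (Suc k) / 2 * of_int (Stirling1 n (Suc k)) * A)
           - 2 * of_nat (Suc k) * (of_int (Stirling1 n k) * A)"
        unfolding S1_Suc_Suc by (simp add: algebra_simps)
      finally show ?thesis unfolding upow_rel h1[symmetric] h2[symmetric] by simp
    qed
    then show ?thesis unfolding Suc
      by (metis mult_cancel_left of_nat_eq_0_iff nat.distinct(1))
  qed
qed


lemma rec_uniq:
  fixes Y Z :: "'a::field_char_0 fps"
  assumes "fps_nth Y 0 = 1" "fps_nth Z 0 = 1"
    and "\<And>n. of_nat (Suc n) * fps_nth Y (Suc n) = (4 * of_nat n - 2) * fps_nth Y n"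
    and "\<And>n. of_nat (Suc n) * fps_nth Z (Suc n) = (4 * of_nat n - 2) * fps_nth Z n"
  shows "Y = Z"
proof (rule fps_ext)
  fix n show "fps_nth Y n = fps_nth Z n"
  proof (induct n)
    case 0 then show ?case using assms by simp
  next
    case (Suc n)
    have "of_nat (Suc n) * fps_nth Y (Suc n) = of_nat (Suc n) * fps_nth Z (Suc n)"
      using assms(3,4)[of n] Suc by simp
    then show ?case by (metis mult_cancel_left of_nat_eq_0_iff nat.distinct(1))
  qed
qed

lemma exp_uu: "fps_exp 1 oo (uu :: 'a::field_char_0 fps) = sqrt_1m4t"
proof (rule rec_uniq)
  show "fps_nth (fps_exp 1 oo (uu :: 'a fps)) 0 = 1" by simp
  show "fps_nth (sqrt_1m4t :: 'a fps) 0 = 1" by (simp add: sqrt_1m4t_def)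
  fix n
  show "of_nat (Suc n) * fps_nth (sqrt_1m4t :: 'a fps) (Suc n) = (4 * of_nat n - 2) * fps_nth sqrt_1m4t n"
  proof -
    have g: "of_nat (Suc n) * ((1/2::'a) gchoose Suc n) = (1/2 - of_nat n) * ((1/2) gchoose n)"
      using gbinomial_mult_1[of "1/2::'a" n] by (simp add: algebra_simps)
    have "of_nat (Suc n) * (((1/2::'a) gchoose Suc n) * (-4) ^ Suc n)
       = (of_nat (Suc n) * ((1/2::'a) gchoose Suc n)) * (-4) * (-4) ^ n"
      by (simp only: power_Suc ac_simps)
    also have "\<dots> = (4 * of_nat n - 2) * (((1/2) gchoose n) * (-4) ^ n)"
      unfolding g by (simp add: algebra_simps)
    finally show ?thesis unfolding sqrt_1m4t_def fps_nth_Abs_fps .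
  qed
  obtain E where E: "E = fps_exp 1 oo (uu :: 'a fps)" by simp
  have dE: "fps_deriv E = E * fps_deriv uu"
    unfolding E by (simp add: fps_compose_deriv uu0)
  have "(1 - 4 * fps_X) * fps_deriv E = E * ((1 - 4 * fps_X) * fps_deriv uu)"
    unfolding dE by (simp only: ac_simps)
  also have "\<dots> = fps_const (-2) * E" unfolding deriv_uu by (simp add: ac_simps)
  finally have "fps_nth ((1 - 4 * fps_X) * fps_deriv E) n = fps_nth (fps_const (-2) * E) n" by simp
  then have "of_nat (Suc n) * fps_nth E (Suc n) = (4 * of_nat n - 2) * fps_nth E n"
    unfolding L14 by (cases n) (simp_all add: algebra_simps)
  then show "of_nat (Suc n) * fps_nth (fps_exp 1 oo (uu :: 'a fps)) (Suc n)
     = (4 * of_nat n - 2) * fps_nth (fps_exp 1 oo uu) n" unfolding E .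
qed


lemma div_eqI:
  fixes A B N :: "'a::field_char_0 fps"
  assumes "fps_nth B 0 \<noteq> 0" "A * B = N"
  shows "A = N / B"
proof -
  have "N / B = A * (B * inverse B)" unfolding fps_divide_unit[OF assms(1)] assms(2)[symmetric]
    by (simp only: ac_simps)
  also have "\<dots> = A" using inverse_mult_eq_1'[OF assms(1)] by simp
  finally show ?thesis by simp
qed

lemma div_mulI:
  fixes B N :: "'a::field_char_0 fps"
  assumes "fps_nth B 0 \<noteq> 0"
  shows "(N / B) * B = N"
  unfolding fps_divide_unit[OF assms(1)] using inverse_mult_eq_1[OF assms(1)]
  by (simp add: ac_simps)

lemma dgf_compose:
  fixes q :: "'a::field_char_0"
  assumes q1: "q \<noteq> 1"
  shows "d_gf v q = qBernoulli_gf v q oo uu"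
proof -
  define c where "c = (q - 1) / plog v q"
  define Den1 :: "'a fps" where "Den1 = fps_const q * fps_exp 1 - 1"
  define Num1 :: "'a fps" where "Num1 = fps_const (q - 1) + fps_const c * fps_X"
  have D10: "fps_nth Den1 0 \<noteq> 0" using q1 by (simp add: Den1_def)
  have F: "qBernoulli_gf v q = Num1 / Den1"
    by (simp add: qBernoulli_gf_def Num1_def Den1_def c_def)
  have "(qBernoulli_gf v q oo uu) * (Den1 oo uu) = Num1 oo uu"
    unfolding F fps_compose_mult_distrib[OF uu0, symmetric] div_mulI[OF D10] ..
  moreover have "Den1 oo uu = fps_const q * sqrt_1m4t - 1"
    unfolding Den1_def by (simp add: fps_compose_sub_distrib fps_compose_mult_distrib[OF uu0] exp_uu)
  moreover have "Num1 oo uu = fps_const (q - 1) + fps_const c * fps_const (1/2) * log_1m4t"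
  proof -
    have "Num1 oo uu = fps_const (q - 1) + fps_const c * uu"
      unfolding Num1_def fps_compose_add_distrib fps_compose_mult_distrib[OF uu0]
        fps_const_compose fps_X_fps_compose_startby0[OF uu0] ..
    then show ?thesis unfolding uu_def by (simp only: mult.assoc)
  qed
  moreover have "fps_nth (fps_const q * sqrt_1m4t - 1) 0 \<noteq> 0"
    using q1 by (simp add: sqrt_1m4t_def)
  ultimately show ?thesis unfolding d_gf_def c_def[symmetric]
    by (metis div_eqI)
qed

lemma dq_formula:
  fixes q :: "'a::field_char_0"
  assumes q1: "q \<noteq> 1"
  shows "dq v q n = (\<Sum>m=0..n. qBernoulli v q m * (1/2) ^ m * of_int (Stirling1 n m)) * (-4) ^ n / fact n"
proof -
  have "dq v q n = (\<Sum>m=0..n. fps_nth (qBernoulli_gf v q) m * fps_nth (uu ^ m) n)"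
    unfolding dq_def dgf_compose[OF q1] fps_compose_nth ..
  also have "\<dots> = (\<Sum>m=0..n. qBernoulli v q m * (1/2) ^ m * of_int (Stirling1 n m) * (-4) ^ n / fact n)"
    by (rule sum.cong) (simp_all add: upow_nth qBernoulli_def)
  also have "\<dots> = (\<Sum>m=0..n. qBernoulli v q m * (1/2) ^ m * of_int (Stirling1 n m)) * (-4) ^ n / fact n"
    by (simp add: sum_distrib_right sum_divide_distrib)
  finally show ?thesis .
qed

lemma second_eq:
  fixes q :: "'a::field_char_0"
  assumes q1: "q \<noteq> 1"
  shows "(-1) ^ n * (1 / 2 ^ (2 * n)) * dq v q n
           = (1 / fact n) * (\<Sum>m=0..n. (1/2) ^ m * qBernoulli v q m * of_int (Stirling1 n m))"
proof -
  have a: "(-4::'a) ^ n = (-1) ^ n * 4 ^ n"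
    by (metis mult_minus1 power_mult_distrib)
  have b: "(2::'a) ^ (2 * n) = 4 ^ n" by (simp add: power_mult)
  have c: "(-1::'a) ^ n * (-1) ^ n = 1"
    by (metis power_mult_distrib mult_minus1 minus_minus power_one)
  have e: "(-1) ^ n * (1 / 2 ^ (2 * n)) * (-4) ^ n = (1::'a)"
    unfolding a b using c by (simp add: field_simps)
  have s: "(\<Sum>m=0..n. qBernoulli v q m * (1/2) ^ m * of_int (Stirling1 n m))
     = (\<Sum>m=0..n. (1/2) ^ m * qBernoulli v q m * of_int (Stirling1 n m))"
    by (rule sum.cong) (simp_all only: mult_ac)
  have "(-1) ^ n * (1 / 2 ^ (2 * n)) * dq v q n
     = ((-1) ^ n * (1 / 2 ^ (2 * n)) * (-4) ^ n) * ((\<Sum>m=0..n. qBernoulli v q m * (1/2) ^ m * of_int (Stirling1 n m)) / fact n)"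
    unfolding dq_formula[OF q1] by (simp only: divide_inverse mult_ac)
  also have "\<dots> = (1 / fact n) * (\<Sum>m=0..n. (1/2) ^ m * qBernoulli v q m * of_int (Stirling1 n m))"
    unfolding e s by simp
  finally show ?thesis .
qed


locale vf =
  fixes p :: nat and v :: "'a::field_char_0 \<Rightarrow> real"
  assumes prime_p: "prime p" and cp: "is_Cp p v"
begin

lemma v_nonneg: "0 \<le> v x" using cp by (simp add: is_Cp_def)
lemma v_eq0: "v x = 0 \<longleftrightarrow> x = 0" using cp by (simp add: is_Cp_def)
lemma v_mult: "v (x * y) = v x * v y" using cp by (simp add: is_Cp_def)
lemma v_ultra: "v (x + y) \<le> max (v x) (v y)" using cp by (simp add: is_Cp_def)
lemma v_p: "v (of_nat p) = 1 / real p" using cp by (simp add: is_Cp_def)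
lemma v_complete: "vcauchy v s \<Longrightarrow> \<exists>L. vtends v s L" using cp by (simp add: is_Cp_def)

lemma v_0[simp]: "v 0 = 0" using v_eq0 by simp

lemma v_1[simp]: "v 1 = 1"
proof -
  have "v 1 = v 1 * v 1" using v_mult[of 1 1] by simp
  moreover have "v 1 \<noteq> 0" using v_eq0 by simp
  ultimately show ?thesis by simp
qed

lemma v_minus1: "v (-1) = 1"
proof -
  have "v (-1) * v (-1) = 1" using v_mult[of "-1" "-1"] by simp
  then have "(v (-1) - 1) * (v (-1) + 1) = 0" by (simp add: algebra_simps)
  moreover have "v (-1) + 1 \<noteq> 0" using v_nonneg[of "-1"] by linarith
  ultimately show ?thesis by simp
qed

lemma v_minus: "v (- x) = v x"
  using v_mult[of "-1" x] v_minus1 by simp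

lemma v_sym: "v (x - y) = v (y - x)"
  using v_minus[of "x - y"] by simp

lemma v_diff: "v (x - y) \<le> max (v x) (v y)"
  using v_ultra[of x "- y"] v_minus[of y] by simp

lemma v_tri: "v (x + y) \<le> v x + v y"
  using v_ultra[of x y] v_nonneg[of x] v_nonneg[of y] by linarith

lemma v_power: "v (x ^ n) = v x ^ n"
  by (induct n) (simp_all add: v_mult)

lemma v_inverse: "v (inverse x) = inverse (v x)"
proof (cases "x = 0")
  case False
  then have "v x * v (inverse x) = 1" using v_mult[of x "inverse x"] by simp
  then show ?thesis using inverse_unique by metis
qed simp

lemma v_divide: "v (x / y) = v x / v y"
  by (simp add: divide_inverse v_mult v_inverse)

lemma v_sum_le:
  assumes "finite A" "\<And>i. i \<in> A \<Longrightarrow> v (f i) \<le> e" "0 \<le> e"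
  shows "v (sum f A) \<le> e"
  using assms
proof (induct A rule: finite_induct)
  case (insert x F)
  then have "v (f x) \<le> e" "v (sum f F) \<le> e" by simp_all
  then show ?case using insert.hyps v_ultra[of "f x" "sum f F"] by (simp add: max_def split: if_splits)
qed simp

lemma v_nat_le1: "v (of_nat n) \<le> 1"
proof (induct n)
  case (Suc n)
  then show ?case using v_ultra[of 1 "of_nat n"] by (simp add: add.commute)
qed simp

lemma v_int_le1: "v (of_int z) \<le> 1"
proof (cases "z \<ge> 0")
  case True
  then show ?thesis using v_nat_le1[of "nat z"] by simp
next
  case False
  then have "of_int z = - (of_nat (nat (- z)) :: 'a)" by simp
  then show ?thesis using v_nat_le1[of "nat (- z)"] v_minus by metis
qed

lemma p_gt1: "1 < p" using prime_p prime_gt_1_nat by blast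

lemma v_coprime:
  assumes "\<not> p dvd k"
  shows "v (of_nat k) = 1"
proof -
  have "coprime p k"
    using assms prime_p by (simp add: prime_imp_coprime_nat)
  then have "gcd (int k) (int p) = 1" by (simp add: coprime_commute coprime_imp_gcd_eq_1)
  then obtain a b where ab: "a * int k + b * int p = 1"
    using bezout_int[of "int k" "int p"] by auto
  then have "(1::'a) = of_int a * of_nat k + of_int b * of_nat p"
    by (metis of_int_1 of_int_add of_int_mult of_int_of_nat_eq)
  then have "1 \<le> max (v (of_int a * of_nat k)) (v (of_int b * of_nat p))"
    using v_ultra v_1 by metis
  moreover have "v (of_int a * of_nat k) \<le> v (of_nat k)"
    using v_int_le1[of a] v_nonneg[of "of_nat k"] v_nonneg[of "of_int a"] by (simp add: v_mult mult_left_le_one_le)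
  moreover have "v (of_int b * of_nat p) < 1"
  proof -
    have "v (of_int b * of_nat p) \<le> 1 / real p"
      using v_int_le1[of b] v_p v_nonneg[of "of_int b"] p_gt1 by (simp add: v_mult divide_right_mono)
    also have "\<dots> < 1" using p_gt1 by simp
    finally show ?thesis .
  qed
  ultimately have "1 \<le> v (of_nat k)" by linarith
  then show ?thesis using v_nat_le1[of k] by simp
qed

lemma v_nat_form:
  assumes "k \<ge> 1"
  shows "\<exists>e. v (of_nat k) = (1 / real p) ^ e \<and> p ^ e \<le> k"
  using assms
proof (induct k rule: less_induct)
  case (less k)
  show ?case
  proof (cases "p dvd k")
    case False
    then show ?thesis using v_coprime less by (intro exI[of _ 0]) simp
  next
    case True
    then obtain k' where k': "k = p * k'" by blast
    then have "k' \<ge> 1" "k' < k" using less p_gt1 by (auto intro!: Nat.gr0I)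
    then obtain e where e: "v (of_nat k') = (1 / real p) ^ e" "p ^ e \<le> k'"
      using less by blast
    have "v (of_nat k) = (1 / real p) ^ Suc e" using e v_p k' by (simp add: v_mult)
    moreover have "p ^ Suc e \<le> k" using e k' by simp
    ultimately show ?thesis by blast
  qed
qed


lemma v_inv_nat_bound:
  assumes "k \<ge> 1"
  shows "v (1 / of_nat k) \<le> real p powr ((real k - 1) / (real p - 1))"
    and "v (1 / of_nat k) \<le> real k"
proof -
  obtain e where e: "v (of_nat k) = (1 / real p) ^ e" "p ^ e \<le> k"
    using v_nat_form[OF assms] by blast
  have vk: "v (1 / of_nat k) = real p ^ e"
    using e(1) by (simp add: v_divide power_one_over)
  have pe: "real p ^ e \<le> real k" using e(2) by (metis of_nat_le_iff of_nat_power)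
  then show "v (1 / of_nat k) \<le> real k" using vk by simp
  have p1: "real p > 1" using p_gt1 by simp
  have "1 + real e * (real p - 1) \<le> (1 + (real p - 1)) ^ e"
    by (rule Bernoulli_inequality) (use p1 in simp)
  then have "1 + real e * (real p - 1) \<le> real p ^ e" by simp
  then have "1 + real e * (real p - 1) \<le> real k" using pe by linarith
  then have "real e \<le> (real k - 1) / (real p - 1)" using p1 by (simp add: field_simps)
  then have "real p powr real e \<le> real p powr ((real k - 1) / (real p - 1))"
    using p1 by (intro powr_mono) simp_all
  then show "v (1 / of_nat k) \<le> real p powr ((real k - 1) / (real p - 1))"
    using vk p1 by (simp add: powr_realpow)
qed

lemma v_p_pow: "v (of_nat (p ^ N)) = (1 / real p) ^ N"
  by (simp add: v_power v_p power_one_over)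

lemma vtends_iff: "vtends v s L \<longleftrightarrow> (\<lambda>n. v (s n - L)) \<longlonglongrightarrow> 0"
  unfolding vtends_def LIMSEQ_iff using v_nonneg by simp

lemma vt_const: "vtends v (\<lambda>n. c) c"
  unfolding vtends_def by simp

lemma vt_cong_ev:
  assumes "\<And>n. n \<ge> N0 \<Longrightarrow> s n = t n" "vtends v t L"
  shows "vtends v s L"
  unfolding vtends_def
proof (intro allI impI)
  fix e :: real assume "e > 0"
  then obtain N where "\<forall>n\<ge>N. v (t n - L) < e" using assms(2) unfolding vtends_def by blast
  then show "\<exists>N. \<forall>n\<ge>N. v (s n - L) < e" using assms(1) by (intro exI[of _ "max N N0"]) auto
qed

lemma vt_dom:
  assumes "g \<longlonglongrightarrow> 0" "eventually (\<lambda>n. v (s n - L) \<le> g n) sequentially"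
  shows "vtends v s L"
  unfolding vtends_iff
  by (rule tendsto_sandwich[of "\<lambda>n. 0" _ _ g]) (use assms v_nonneg in auto)

lemma vt_add:
  assumes "vtends v s L" "vtends v t M"
  shows "vtends v (\<lambda>n. s n + t n) (L + M)"
proof -
  have "(\<lambda>n. v (s n - L) + v (t n - M)) \<longlonglongrightarrow> 0 + 0"
    using assms unfolding vtends_iff by (intro tendsto_add)
  moreover have "v (s n + t n - (L + M)) \<le> v (s n - L) + v (t n - M)" for n
    using v_tri[of "s n - L" "t n - M"] by (simp add: algebra_simps)
  ultimately show ?thesis by (intro vt_dom[of "\<lambda>n. v (s n - L) + v (t n - M)"]) auto
qed

lemma vt_mult:
  assumes "vtends v s L" "vtends v t M"
  shows "vtends v (\<lambda>n. s n * t n) (L * M)"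
proof -
  have "(\<lambda>n. v (s n - L) * v (t n - M) + v L * v (t n - M) + v M * v (s n - L)) \<longlonglongrightarrow> 0 * 0 + v L * 0 + v M * 0"
    using assms unfolding vtends_iff by (intro tendsto_add tendsto_mult tendsto_const)
  moreover have "v (s n * t n - L * M) \<le> v (s n - L) * v (t n - M) + v L * v (t n - M) + v M * v (s n - L)" for n
  proof -
    have "s n * t n - L * M = (s n - L) * (t n - M) + L * (t n - M) + M * (s n - L)"
      by (simp add: algebra_simps)
    moreover have "v ((s n - L) * (t n - M) + L * (t n - M) + M * (s n - L))
       \<le> v ((s n - L) * (t n - M) + L * (t n - M)) + v (M * (s n - L))" by (rule v_tri)
    moreover have "v ((s n - L) * (t n - M) + L * (t n - M))
       \<le> v ((s n - L) * (t n - M)) + v (L * (t n - M))" by (rule v_tri)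
    ultimately show ?thesis by (simp add: v_mult)
  qed
  ultimately show ?thesis
    by (intro vt_dom[of "\<lambda>n. v (s n - L) * v (t n - M) + v L * v (t n - M) + v M * v (s n - L)"]) auto
qed

lemma vt_sum:
  assumes "finite A" "\<And>i. i \<in> A \<Longrightarrow> vtends v (f i) (L i)"
  shows "vtends v (\<lambda>n. \<Sum>i\<in>A. f i n) (\<Sum>i\<in>A. L i)"
  using assms
proof (induct A rule: finite_induct)
  case empty then show ?case by (simp add: vt_const)
next
  case (insert x F)
  then show ?case by (simp add: vt_add)
qed

lemma vt_unique:
  assumes "vtends v s L" "vtends v s M"
  shows "L = M"
proof (rule ccontr)
  assume "L \<noteq> M"
  then have "L - M \<noteq> 0" by simp
  then have e: "v (L - M) / 2 > 0" using v_eq0[of "L - M"] v_nonneg[of "L - M"] by linarith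
  obtain N1 where N1: "\<forall>n\<ge>N1. v (s n - L) < v (L - M) / 2" using assms(1) e unfolding vtends_def by blast
  obtain N2 where N2: "\<forall>n\<ge>N2. v (s n - M) < v (L - M) / 2" using assms(2) e unfolding vtends_def by blast
  define n where "n = max N1 N2"
  have "v (L - M) \<le> v (L - s n) + v (s n - M)" using v_tri[of "L - s n" "s n - M"] by simp
  also have "\<dots> < v (L - M)"
  proof -
    have "n \<ge> N1" "n \<ge> N2" unfolding n_def by simp_all
    then have "v (s n - L) < v (L - M) / 2" "v (s n - M) < v (L - M) / 2"
      using N1 N2 by blast+
    then show ?thesis using v_sym[of "s n" L] by linarith
  qed
  finally show False by simp
qed

lemma vt_inverse:
  assumes "vtends v s L" "L \<noteq> 0"
  shows "vtends v (\<lambda>n. inverse (s n)) (inverse L)"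
proof -
  have vL: "v L > 0" using assms(2) v_eq0 v_nonneg[of L] by (simp add: order_le_less)
  obtain N where N: "\<forall>n\<ge>N. v (s n - L) < v L / 2" using assms(1) vL unfolding vtends_def
    by (metis half_gt_zero)
  have sn: "v (s n) \<ge> v L / 2" if "n \<ge> N" for n
  proof -
    have "v L \<le> v (s n) + v (L - s n)" using v_tri[of "s n" "L - s n"] by simp
    then show ?thesis using N that v_sym[of L "s n"] by fastforce
  qed
  have "(\<lambda>n. v (s n - L) * (2 / (v L * v L))) \<longlonglongrightarrow> 0 * (2 / (v L * v L))"
    using assms(1) unfolding vtends_iff by (intro tendsto_mult tendsto_const)
  moreover have "v (inverse (s n) - inverse L) \<le> v (s n - L) * (2 / (v L * v L))" if "n \<ge> N" for n
  proof -
    have s0: "s n \<noteq> 0" using sn[OF that] vL by (metis v_0 half_gt_zero not_le)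
    have "inverse (s n) - inverse L = (L - s n) / (s n * L)" using s0 assms(2)
      by (simp add: field_simps)
    then have "v (inverse (s n) - inverse L) = v (s n - L) / (v (s n) * v L)"
      using v_sym by (simp add: v_divide v_mult)
    also have "\<dots> \<le> v (s n - L) / (v L / 2 * v L)"
      using sn[OF that] vL v_nonneg[of "s n - L"]
      by (intro divide_left_mono mult_right_mono mult_pos_pos) simp_all
    also have "\<dots> = v (s n - L) * (2 / (v L * v L))" by simp
    finally show ?thesis .
  qed
  ultimately show ?thesis
    by (intro vt_dom[of "\<lambda>n. v (s n - L) * (2 / (v L * v L))"]) (auto simp: eventually_sequentially)
qed

end

lemma ex_pow_small:
  fixes x c e :: real
  assumes "0 \<le> x" "x < 1" "0 < e"
  shows "\<exists>N. \<forall>n\<ge>N. c * x ^ n < e"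
proof -
  have "(\<lambda>n. c * x ^ n) \<longlonglongrightarrow> c * 0"
    using assms by (intro tendsto_mult tendsto_const LIMSEQ_power_zero) simp
  then have "eventually (\<lambda>n. c * x ^ n < e) sequentially"
    using assms(3) by (intro order_tendstoD(2)) simp_all
  then show ?thesis unfolding eventually_sequentially .
qed


definition "Den1 (q::'a::field_char_0) = fps_const q * fps_exp 1 - 1"

lemma geo_fps:
  fixes q :: "'a::field_char_0"
  assumes q1: "q \<noteq> 1"
  shows "(\<Sum>x<M. of_nat x ^ m * q ^ x)
       = fact m * fps_nth ((fps_const (q ^ M) * fps_exp (of_nat M) - 1) * inverse (Den1 q)) m"
proof -
  define Y where "Y = fps_const q * fps_exp (1::'a)"
  have Yx: "Y ^ x = fps_const (q ^ x) * fps_exp (of_nat x)" for x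
    unfolding Y_def power_mult_distrib fps_const_power fps_exp_power_mult by simp
  have D0: "fps_nth (Den1 q) 0 \<noteq> 0" using q1 by (simp add: Den1_def)
  have DY: "Den1 q = Y - 1" unfolding Den1_def Y_def ..
  have "Y ^ M - 1 = (Y - 1) * (\<Sum>x<M. Y ^ x)" by (rule power_diff_1_eq)
  then have "(Y ^ M - 1) * inverse (Den1 q) = (\<Sum>x<M. Y ^ x) * (Den1 q * inverse (Den1 q))"
    unfolding DY by (simp only: mult_ac)
  also have "\<dots> = (\<Sum>x<M. Y ^ x)" using inverse_mult_eq_1'[OF D0] by simp
  finally have e: "(fps_const (q ^ M) * fps_exp (of_nat M) - 1) * inverse (Den1 q) = (\<Sum>x<M. Y ^ x)"
    unfolding Yx .
  have "fps_nth (\<Sum>x<M. Y ^ x) m = (\<Sum>x<M. q ^ x * (of_nat x ^ m / fact m))"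
    unfolding fps_sum_nth Yx by simp
  also have "\<dots> = (\<Sum>x<M. (1 / fact m) * (of_nat x ^ m * q ^ x))"
    by (rule sum.cong) simp_all
  also have "\<dots> = (1 / fact m) * (\<Sum>x<M. of_nat x ^ m * q ^ x)"
    by (rule sum_distrib_left[symmetric])
  finally show ?thesis unfolding e by simp
qed

lemma J_eq:
  fixes q :: "'a::field_char_0"
  assumes q1: "q \<noteq> 1" and qM: "q ^ M \<noteq> 1"
  shows "(1 / qnum q M) * (\<Sum>x<M. of_nat x ^ m * q ^ x)
     = fact m * (\<Sum>j=0..m. fps_nth (fps_const (1 / (q ^ M - 1)) * (fps_const (q ^ M) * fps_exp (of_nat M) - 1)) j
                       * fps_nth (fps_const (q - 1) * inverse (Den1 q)) (m - j))"
proof -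
  define E where "E = fps_const (q ^ M) * fps_exp (of_nat M) - (1::'a fps)"
  define A where "A = E * inverse (Den1 q)"
  have "(fps_const (1 / (q ^ M - 1)) * E) * (fps_const (q - 1) * inverse (Den1 q))
      = (fps_const (1 / (q ^ M - 1)) * fps_const (q - 1)) * A"
    unfolding A_def by (simp only: mult_ac)
  also have "\<dots> = fps_const ((q - 1) / (q ^ M - 1)) * A"
    unfolding fps_const_mult[symmetric] by simp
  finally have CG: "(fps_const (1 / (q ^ M - 1)) * E) * (fps_const (q - 1) * inverse (Den1 q))
      = fps_const ((q - 1) / (q ^ M - 1)) * A" .
  have "(\<Sum>j=0..m. fps_nth (fps_const (1 / (q ^ M - 1)) * E) j
                       * fps_nth (fps_const (q - 1) * inverse (Den1 q)) (m - j))
      = fps_nth ((fps_const (1 / (q ^ M - 1)) * E) * (fps_const (q - 1) * inverse (Den1 q))) m"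
    by (rule fps_mult_nth[symmetric])
  also have "\<dots> = (q - 1) / (q ^ M - 1) * fps_nth A m" unfolding CG by simp
  finally have S: "(\<Sum>j=0..m. fps_nth (fps_const (1 / (q ^ M - 1)) * E) j
                       * fps_nth (fps_const (q - 1) * inverse (Den1 q)) (m - j))
      = (q - 1) / (q ^ M - 1) * fps_nth A m" .
  have Q: "1 / qnum q M = (q - 1) / (q ^ M - 1)"
  proof -
    have "1 / qnum q M = (1 - q) / (1 - q ^ M)" unfolding qnum_def by simp
    also have "\<dots> = (- (q - 1)) / (- (q ^ M - 1))" by simp
    also have "\<dots> = (q - 1) / (q ^ M - 1)" by (rule minus_divide_divide)
    finally show ?thesis .
  qed
  have F: "(\<Sum>x<M. of_nat x ^ m * q ^ x) = fact m * fps_nth A m"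
    unfolding A_def E_def by (rule geo_fps[OF q1])
  show ?thesis unfolding E_def[symmetric] S Q F by (simp only: mult_ac)
qed

locale vq = vf +
  fixes q :: "'a::field_char_0"
  assumes q1: "q \<noteq> 1"
    and small: "v (1 - q) < real p powr (- 1 / (real p - 1))"
begin

definition "r = v (q - 1)"
definition "kap = real p powr (1 / (real p - 1))"
definition "s = r * kap"
definition "lp N = (\<Sum>k=1..N. (-1)^(k+1) * (q - 1)^k / of_nat k)"

lemma r_pos: "r > 0"
  using q1 v_eq0[of "q - 1"] v_nonneg[of "q - 1"] unfolding r_def by (simp add: order_le_less)

lemma kap_pos: "kap > 0" using p_gt1 unfolding kap_def by simp

lemma s_nonneg: "s \<ge> 0" using r_pos kap_pos unfolding s_def by simp

lemma s_lt1: "s < 1"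
proof -
  have "real p powr (- 1 / (real p - 1)) = inverse kap"
    unfolding kap_def by (simp add: powr_minus[symmetric])
  then have "r < inverse kap" using small v_sym[of 1 q] unfolding r_def by simp
  then show ?thesis using kap_pos unfolding s_def by (simp add: field_simps)
qed

lemma tb_gen:
  assumes k: "k \<ge> 1" and c: "v c \<le> 1"
  shows "v (c * (q - 1) ^ k / of_nat k) \<le> r * s ^ (k - 1)"
proof -
  have e: "c * (q - 1) ^ k / of_nat k = c * (q - 1) ^ k * (1 / of_nat k)" by simp
  have pk: "real p powr ((real k - 1) / (real p - 1)) = kap ^ (k - 1)"
  proof -
    have "kap ^ (k - 1) = kap powr real (k - 1)" using kap_pos by (simp add: powr_realpow)
    also have "\<dots> = real p powr ((1 / (real p - 1)) * real (k - 1))" unfolding kap_def by (rule powr_powr)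
    also have "(1 / (real p - 1)) * real (k - 1) = (real k - 1) / (real p - 1)" using k by (simp add: of_nat_diff)
    finally show ?thesis by simp
  qed
  have "v (c * (q - 1) ^ k / of_nat k) = v c * r ^ k * v (1 / of_nat k)"
    unfolding e v_mult v_power r_def ..
  also have "\<dots> \<le> 1 * r ^ k * kap ^ (k - 1)"
    using v_inv_nat_bound(1)[OF k] c r_pos v_nonneg[of c] v_nonneg[of "1 / of_nat k"] unfolding pk
    by (intro mult_mono) simp_all
  also have "\<dots> = r * s ^ (k - 1)"
    using k unfolding s_def by (cases k) (simp_all add: power_mult_distrib)
  finally show ?thesis .
qed

lemma tb_log: "k \<ge> 1 \<Longrightarrow> v ((-1)^(k+1) * (q - 1)^k / of_nat k) \<le> r * s ^ (k - 1)"
  by (rule tb_gen) (simp_all add: v_power v_minus1 v_minus)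

lemma s_pow_mono: "m \<le> n \<Longrightarrow> r * s ^ n \<le> r * s ^ m"
  using s_nonneg s_lt1 r_pos by (intro mult_left_mono power_decreasing) simp_all

lemma lp_diff:
  assumes "n \<le> m"
  shows "v (lp m - lp n) \<le> r * s ^ n"
proof -
  have "lp m - lp n = (\<Sum>k\<in>{1..m} - {1..n}. (-1)^(k+1) * (q - 1)^k / of_nat k)"
    unfolding lp_def using assms by (subst sum_diff) auto
  also have "{1..m} - {1..n} = {Suc n..m}" by auto
  finally have eq: "lp m - lp n = (\<Sum>k=Suc n..m. (-1)^(k+1) * (q - 1)^k / of_nat k)" .
  show ?thesis unfolding eq
  proof (rule v_sum_le)
    fix k assume "k \<in> {Suc n..m}"
    then have "k \<ge> 1" "n \<le> k - 1" by auto
    then show "v ((-1)^(k+1) * (q - 1)^k / of_nat k) \<le> r * s ^ n"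
      using order_trans[OF tb_log s_pow_mono] by simp
  qed (use r_pos s_nonneg in simp_all)
qed

lemma lp_cauchy: "vcauchy v lp"
  unfolding vcauchy_def
proof (intro allI impI)
  fix e :: real assume "e > 0"
  then obtain N where N: "\<forall>n\<ge>N. r * s ^ n < e" using ex_pow_small[OF s_nonneg s_lt1] by blast
  show "\<exists>N. \<forall>m\<ge>N. \<forall>n\<ge>N. v (lp m - lp n) < e"
  proof (intro exI allI impI)
    fix m n assume mn: "N \<le> m" "N \<le> n"
    show "v (lp m - lp n) < e"
    proof (cases "n \<le> m")
      case True
      then show ?thesis using lp_diff[OF True] N mn by (meson le_less_trans)
    next
      case False
      then have "v (lp n - lp m) \<le> r * s ^ m" using lp_diff by simp
      then show ?thesis using N mn v_sym[of "lp m" "lp n"] by (metis le_less_trans)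
    qed
  qed
qed

definition "LL = plog v q"

lemma lp_tends: "vtends v lp LL"
proof -
  obtain L where L: "vtends v lp L" using v_complete[OF lp_cauchy] by blast
  have "plog v q = L" unfolding plog_def
  proof (rule the_equality)
    show "vtends v (\<lambda>N. \<Sum>k = 1..N. (- 1) ^ (k + 1) * (q - 1) ^ k / of_nat k) L"
      using L unfolding lp_def[abs_def] .
  next
    fix L' assume "vtends v (\<lambda>N. \<Sum>k = 1..N. (- 1) ^ (k + 1) * (q - 1) ^ k / of_nat k) L'"
    then show "L' = L" using L vt_unique unfolding lp_def[abs_def] by blast
  qed
  then show ?thesis using L unfolding LL_def by simp
qed

lemma lp_close: "N \<ge> 1 \<Longrightarrow> v (lp N - (q - 1)) \<le> r * s"
proof -
  assume N: "N \<ge> 1"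
  have l1: "lp 1 = q - 1" unfolding lp_def by simp
  show ?thesis using lp_diff[OF N] unfolding l1 by simp
qed

lemma LL_close: "v (LL - (q - 1)) \<le> r * s"
proof (rule ccontr)
  assume A: "\<not> ?thesis"
  then have pos: "v (LL - (q - 1)) > 0" using r_pos s_nonneg by (meson less_le_trans not_le mult_nonneg_nonneg less_imp_le)
  obtain N where N: "\<forall>n\<ge>N. v (lp n - LL) < v (LL - (q - 1))"
    using lp_tends pos unfolding vtends_def by blast
  define n where "n = max N 1"
  have eq: "LL - (q - 1) = (LL - lp n) + (lp n - (q - 1))" by simp
  have "v (LL - (q - 1)) \<le> max (v (LL - lp n)) (v (lp n - (q - 1)))"
    unfolding eq by (rule v_ultra)
  moreover have "v (LL - lp n) < v (LL - (q - 1))" using N v_sym[of LL "lp n"] unfolding n_def by simp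
  moreover have "v (lp n - (q - 1)) \<le> r * s" using lp_close unfolding n_def by simp
  ultimately show False using A by linarith
qed

lemma LL_nz: "LL \<noteq> 0"
proof
  assume "LL = 0"
  then have "v (q - 1) \<le> r * s" using LL_close v_minus[of "q - 1"] by simp
  then have "r \<le> r * s" unfolding r_def .
  then show False using r_pos s_lt1 by simp
qed


definition "T N = (q ^ (p ^ N) - 1) / of_nat (p ^ N)"
definition "Dd M j = (of_nat ((M - 1) choose j) :: 'a) - (-1) ^ j"

lemma pN_pos: "p ^ N \<ge> 1" using p_gt1 by simp

lemma N_le_pN: "N \<le> p ^ N"
proof -
  have "N < 2 ^ N" by simp
  also have "(2::nat) ^ N \<le> p ^ N" using p_gt1 by (intro power_mono) simp_all
  finally show ?thesis by simp
qed

lemma T_expand: "T N = (\<Sum>k=1..p^N. of_nat ((p^N - 1) choose (k - 1)) * (q - 1) ^ k / of_nat k)"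
proof -
  define M where "M = p ^ N"
  have M1: "M \<ge> 1" unfolding M_def using pN_pos .
  have "q ^ M = ((q - 1) + 1) ^ M" by simp
  also have "\<dots> = (\<Sum>k\<le>M. of_nat (M choose k) * (q - 1) ^ k * 1 ^ (M - k))"
    by (rule binomial_ring)
  also have "\<dots> = (\<Sum>k=0..M. of_nat (M choose k) * (q - 1) ^ k)" by (simp add: atMost_atLeast0)
  also have "\<dots> = 1 + (\<Sum>k=1..M. of_nat (M choose k) * (q - 1) ^ k)"
    by (subst sum.atLeast_Suc_atMost) simp_all
  finally have qM: "q ^ M - 1 = (\<Sum>k=1..M. of_nat (M choose k) * (q - 1) ^ k)" by simp
  have tm: "of_nat (M choose k) * (q - 1) ^ k / of_nat M
      = of_nat ((M - 1) choose (k - 1)) * (q - 1) ^ k / of_nat k" if k: "k \<in> {1..M}" for k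
  proof -
    have "k * (M choose k) = M * ((M - 1) choose (k - 1))"
      using k by (intro times_binomial_minus1_eq) simp
    then have e: "(of_nat k :: 'a) * of_nat (M choose k) = of_nat M * of_nat ((M - 1) choose (k - 1))"
      by (metis of_nat_mult)
    have "k \<noteq> 0" "M \<noteq> 0" using k M1 by auto
    then show ?thesis using e by (simp add: field_simps)
  qed
  have "T N = (\<Sum>k=1..M. of_nat (M choose k) * (q - 1) ^ k / of_nat M)"
    unfolding T_def M_def[symmetric] qM by (simp add: sum_divide_distrib)
  also have "\<dots> = (\<Sum>k=1..M. of_nat ((M - 1) choose (k - 1)) * (q - 1) ^ k / of_nat k)"
    by (rule sum.cong) (simp_all add: tm)
  finally show ?thesis unfolding M_def .
qed

lemma T_minus_lp: "T N - lp (p ^ N) = (\<Sum>k=1..p^N. Dd (p^N) (k - 1) * (q - 1) ^ k / of_nat k)"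
proof -
  have "T N - lp (p ^ N) = (\<Sum>k=1..p^N. of_nat ((p^N - 1) choose (k - 1)) * (q - 1) ^ k / of_nat k
        - (-1)^(k+1) * (q - 1)^k / of_nat k)"
    unfolding T_expand lp_def by (rule sum_subtractf[symmetric])
  also have "\<dots> = (\<Sum>k=1..p^N. Dd (p^N) (k - 1) * (q - 1) ^ k / of_nat k)"
  proof (rule sum.cong)
    fix k assume "k \<in> {1..p^N}"
    then obtain j where "k = Suc j" by (cases k) auto
    then have "(-1::'a)^(k+1) = (-1)^(k - 1)" by simp
    then show "of_nat ((p^N - 1) choose (k - 1)) * (q - 1) ^ k / of_nat k
        - (-1)^(k+1) * (q - 1)^k / of_nat k = Dd (p^N) (k - 1) * (q - 1) ^ k / of_nat k"
      unfolding Dd_def by (simp add: diff_divide_distrib left_diff_distrib)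
  qed simp
  finally show ?thesis .
qed


lemma Dd_bound1: "v (Dd M j) \<le> 1"
proof -
  have "v (Dd M j) \<le> max (v (of_nat ((M - 1) choose j) :: 'a)) (v ((-1::'a) ^ j))"
    unfolding Dd_def by (rule v_diff)
  then show ?thesis using v_nat_le1[of "(M - 1) choose j"] by (simp add: v_power v_minus1)
qed

lemma binom_bound:
  assumes i: "i \<ge> 1"
  shows "v (of_nat (p ^ N choose i) :: 'a) \<le> real i * (1 / real p) ^ N"
proof -
  define M where "M = p ^ N"
  have "i * (M choose i) = M * ((M - 1) choose (i - 1))"
    using i by (intro times_binomial_minus1_eq) simp
  then have e: "(of_nat i :: 'a) * of_nat (M choose i) = of_nat M * of_nat ((M - 1) choose (i - 1))"
    by (metis of_nat_mult)
  have vi: "v (of_nat i :: 'a) > 0" using i v_eq0[of "of_nat i"] v_nonneg[of "of_nat i"] by simp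
  have vi2: "1 / v (of_nat i :: 'a) \<le> real i"
    using v_inv_nat_bound(2)[OF i] by (simp add: v_divide)
  have "v (of_nat i :: 'a) * v (of_nat (M choose i) :: 'a) \<le> (1 / real p) ^ N"
  proof -
    have "v (of_nat i :: 'a) * v (of_nat (M choose i) :: 'a)
        = v (of_nat M :: 'a) * v (of_nat ((M - 1) choose (i - 1)) :: 'a)"
      using e by (metis v_mult)
    also have "\<dots> \<le> (1 / real p) ^ N * 1"
      unfolding M_def v_p_pow using v_nat_le1 by (intro mult_left_mono) simp_all
    finally show ?thesis by simp
  qed
  then have "v (of_nat (M choose i) :: 'a) \<le> (1 / real p) ^ N / v (of_nat i :: 'a)"
    using vi by (subst pos_le_divide_eq) (simp_all add: mult.commute)
  also have "\<dots> = (1 / real p) ^ N * (1 / v (of_nat i :: 'a))" by simp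
  also have "\<dots> \<le> (1 / real p) ^ N * real i"
    using vi2 by (intro mult_left_mono) simp_all
  finally show ?thesis unfolding M_def by (simp add: mult.commute)
qed

lemma Dd_bound2: "v (Dd (p ^ N) j) \<le> real j * (1 / real p) ^ N"
proof (induct j)
  case 0 then show ?case by (simp add: Dd_def)
next
  case (Suc j)
  obtain M' where M': "p ^ N = Suc M'" using pN_pos[of N] by (cases "p ^ N") auto
  have "Dd (p ^ N) (Suc j) = of_nat (p ^ N choose Suc j) - Dd (p ^ N) j"
    unfolding Dd_def M' by simp
  then have "v (Dd (p ^ N) (Suc j)) \<le> max (v (of_nat (p ^ N choose Suc j) :: 'a)) (v (Dd (p ^ N) j))"
    using v_diff by metis
  moreover have "v (of_nat (p ^ N choose Suc j) :: 'a) \<le> real (Suc j) * (1 / real p) ^ N"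
    by (rule binom_bound) simp
  moreover have "real j * (1 / real p) ^ N \<le> real (Suc j) * (1 / real p) ^ N"
    by (intro mult_right_mono) simp_all
  ultimately show ?case using Suc by linarith
qed

lemma T_tends: "vtends v T LL"
  unfolding vtends_def
proof (intro allI impI)
  fix e :: real assume e: "e > 0"
  obtain K where K: "r * s ^ K < e" using ex_pow_small[OF s_nonneg s_lt1 e, of r] by blast
  have p0: "0 \<le> 1 / real p" "1 / real p < 1" using p_gt1 by simp_all
  obtain N0 where N0: "\<forall>N\<ge>N0. (real K * r) * (1 / real p) ^ N < e"
    using ex_pow_small[OF p0 e] by blast
  obtain N1 where N1: "\<forall>n\<ge>N1. v (lp n - LL) < e" using lp_tends e unfolding vtends_def by blast
  show "\<exists>N0. \<forall>N\<ge>N0. v (T N - LL) < e"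
  proof (intro exI allI impI)
    fix N assume N: "max N0 N1 \<le> N"
    define B where "B = max (r * s ^ K) (real K * r * (1 / real p) ^ N)"
    have B: "B < e" using K N0 N unfolding B_def by simp
    have "v (T N - lp (p ^ N)) \<le> B"
      unfolding T_minus_lp
    proof (rule v_sum_le)
      fix k assume k: "k \<in> {1..p^N}"
      then have k1: "k \<ge> 1" by simp
      have "v (Dd (p^N) (k - 1) * (q - 1) ^ k / of_nat k)
          = v (Dd (p^N) (k - 1)) * v (1 * (q - 1) ^ k / of_nat k)"
        by (simp add: v_mult[symmetric])
      also have "\<dots> \<le> v (Dd (p^N) (k - 1)) * (r * s ^ (k - 1))"
        using tb_gen[OF k1, of 1] v_nonneg by (intro mult_left_mono) simp_all
      also have "\<dots> \<le> B"
      proof (cases "K \<le> k - 1")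
        case True
        have "v (Dd (p^N) (k - 1)) * (r * s ^ (k - 1)) \<le> 1 * (r * s ^ K)"
          using Dd_bound1 s_pow_mono[OF True] r_pos s_nonneg
          by (intro mult_mono) simp_all
        then show ?thesis unfolding B_def by simp
      next
        case False
        have "s ^ (k - 1) \<le> 1" using s_nonneg s_lt1 by (simp add: power_le_one)
        then have "r * s ^ (k - 1) \<le> r" using r_pos by (simp add: mult_left_le)
        moreover have "v (Dd (p^N) (k - 1)) \<le> real K * (1 / real p) ^ N"
          using Dd_bound2[of N "k - 1"] False
          by (meson order_trans mult_right_mono of_nat_le_iff not_le less_imp_le zero_le_power p0(1))
        ultimately have "v (Dd (p^N) (k - 1)) * (r * s ^ (k - 1)) \<le> real K * (1 / real p) ^ N * r"
          using r_pos s_nonneg v_nonneg by (intro mult_mono) simp_all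
        then show ?thesis unfolding B_def by (simp add: mult_ac)
      qed
      finally show "v (Dd (p^N) (k - 1) * (q - 1) ^ k / of_nat k) \<le> B" .
    next
      have "0 \<le> r * s ^ K" using r_pos s_nonneg by simp
      then show "0 \<le> B" unfolding B_def by (simp add: le_max_iff_disj)
    qed simp
    moreover have "v (lp (p ^ N) - LL) < e"
      using N1 N N_le_pN[of N] by simp
    moreover have "T N - LL = (T N - lp (p ^ N)) + (lp (p ^ N) - LL)" by simp
    then have "v (T N - LL) \<le> max (v (T N - lp (p ^ N))) (v (lp (p ^ N) - LL))"
      using v_ultra by metis
    ultimately show "v (T N - LL) < e" using B by linarith
  qed
qed


lemma M_tends0: "vtends v (\<lambda>N. of_nat (p ^ N)) 0"
proof (rule vt_dom[of "\<lambda>N. (1 / real p) ^ N"])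
  show "(\<lambda>N. (1 / real p) ^ N) \<longlonglongrightarrow> 0" using p_gt1 by (intro LIMSEQ_power_zero) simp
qed (simp add: v_p_pow del: of_nat_power)

lemma Mpow_tends0:
  assumes j: "j \<ge> 1"
  shows "vtends v (\<lambda>N. of_nat (p ^ N) ^ j) 0"
proof (rule vt_dom[of "\<lambda>N. (1 / real p) ^ N"])
  show "(\<lambda>N. (1 / real p) ^ N) \<longlonglongrightarrow> 0" using p_gt1 by (intro LIMSEQ_power_zero) simp
  show "\<forall>\<^sub>F N in sequentially. v (of_nat (p ^ N) ^ j - 0) \<le> (1 / real p) ^ N"
  proof (rule always_eventually, rule allI)
    fix N
    have x: "0 \<le> (1 / real p) ^ N" "(1 / real p) ^ N \<le> 1" using p_gt1 by (simp_all add: power_le_one)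
    have "v (of_nat (p ^ N) ^ j - 0) = ((1 / real p) ^ N) ^ j"
      by (simp add: v_power v_p_pow del: of_nat_power)
    also have "\<dots> \<le> ((1 / real p) ^ N) ^ 1" using x j by (intro power_decreasing) simp_all
    finally show "v (of_nat (p ^ N) ^ j - 0) \<le> (1 / real p) ^ N" by simp
  qed
qed

lemma qM_tends: "vtends v (\<lambda>N. q ^ (p ^ N)) 1"
proof -
  have gen: "x = 1 + of_nat M * ((x - 1) / of_nat M)" if "M \<ge> 1" for M :: nat and x :: 'a
    using that by simp
  have "q ^ (p ^ N) = 1 + of_nat (p ^ N) * T N" for N
    unfolding T_def by (rule gen[OF pN_pos])
  moreover have "vtends v (\<lambda>N. 1 + of_nat (p ^ N) * T N) (1 + 0 * LL)"
    by (intro vt_add vt_const vt_mult M_tends0 T_tends)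
  ultimately show ?thesis by simp
qed

lemma ev_qM: "\<exists>N0. \<forall>N\<ge>N0. q ^ (p ^ N) \<noteq> 1 \<and> T N \<noteq> 0"
proof -
  have vL: "v LL > 0" using LL_nz v_eq0[of LL] v_nonneg[of LL] by (simp add: order_le_less)
  obtain N0 where N0: "\<forall>N\<ge>N0. v (T N - LL) < v LL" using T_tends vL unfolding vtends_def by blast
  have "q ^ (p ^ N) \<noteq> 1 \<and> T N \<noteq> 0" if "N \<ge> N0" for N
  proof -
    have "v (T N - LL) < v LL" using N0 that by blast
    have Tn: "T N \<noteq> 0"
    proof
      assume "T N = 0"
      then show False using \<open>v (T N - LL) < v LL\<close> v_minus[of LL] by simp
    qed
    moreover have "q ^ (p ^ N) \<noteq> 1"
    proof
      assume "q ^ (p ^ N) = 1"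
      then have "T N = 0" unfolding T_def by simp
      with Tn show False by simp
    qed
    ultimately show ?thesis by simp
  qed
  then show ?thesis by blast
qed

lemma P_tends: "vtends v (\<lambda>N. of_nat (p ^ N) / (q ^ (p ^ N) - 1)) (inverse LL)"
proof -
  obtain N0 where N0: "\<forall>N\<ge>N0. q ^ (p ^ N) \<noteq> 1 \<and> T N \<noteq> 0" using ev_qM by blast
  show ?thesis
  proof (rule vt_cong_ev[of N0])
    fix N assume "N \<ge> N0"
    show "of_nat (p ^ N) / (q ^ (p ^ N) - 1) = inverse (T N)"
      unfolding T_def by (rule inverse_divide[symmetric])
  qed (rule vt_inverse[OF T_tends LL_nz])
qed

definition "cc N j = fps_nth (fps_const (1 / (q ^ (p ^ N) - 1)) * (fps_const (q ^ (p ^ N)) * fps_exp (of_nat (p ^ N)) - 1)) j"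
definition "Gam = 1 + fps_const (inverse LL) * fps_X"

lemma ccgen: "fps_nth (fps_const (1 / (x - 1)) * (fps_const x * fps_exp a - 1)) (Suc i)
   = x * (a / (x - 1)) * (a ^ i * (1 / fact (Suc i)))" for x a :: 'a
proof -
  have "fps_nth (fps_const (1 / (x - 1)) * (fps_const x * fps_exp a - 1)) (Suc i)
     = 1 / (x - 1) * (x * (a ^ Suc i / fact (Suc i)))"
    by (simp del: fact_Suc power_Suc)
  also have "\<dots> = x * (a / (x - 1)) * (a ^ i * (1 / fact (Suc i)))"
    by (simp only: power_Suc divide_inverse mult_ac mult_1_left mult_1_right)
  finally show ?thesis .
qed

lemma cc_Suc: "cc N (Suc i) = q ^ (p ^ N) * (of_nat (p ^ N) / (q ^ (p ^ N) - 1)) * (of_nat (p ^ N) ^ i * (1 / fact (Suc i)))"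
  unfolding cc_def by (rule ccgen)

lemma cc_tends: "vtends v (\<lambda>N. cc N j) (fps_nth Gam j)"
proof (cases j)
  case 0
  obtain N0 where N0: "\<forall>N\<ge>N0. q ^ (p ^ N) \<noteq> 1 \<and> T N \<noteq> 0" using ev_qM by blast
  show ?thesis unfolding 0
  proof (rule vt_cong_ev[of N0])
    fix N assume "N \<ge> N0"
    then show "cc N 0 = 1" using N0 unfolding cc_def by simp
  qed (simp add: Gam_def vt_const)
next
  case (Suc i)
  show ?thesis
  proof (cases i)
    case 0
    have "vtends v (\<lambda>N. q ^ (p ^ N) * (of_nat (p ^ N) / (q ^ (p ^ N) - 1)) * (of_nat (p ^ N) ^ 0 * (1 / fact (Suc 0))))
        (1 * inverse LL * (1 * (1 / fact (Suc 0))))"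
      by (intro vt_mult qM_tends P_tends vt_const) (simp add: vt_const)
    then show ?thesis unfolding Suc 0 cc_Suc by (simp add: Gam_def)
  next
    case (Suc i')
    have "vtends v (\<lambda>N. q ^ (p ^ N) * (of_nat (p ^ N) / (q ^ (p ^ N) - 1)) * (of_nat (p ^ N) ^ i * (1 / fact (Suc i))))
        (1 * inverse LL * (0 * (1 / fact (Suc i))))"
      using Suc by (intro vt_mult qM_tends P_tends vt_const Mpow_tends0) simp
    then show ?thesis unfolding \<open>j = Suc i\<close> cc_Suc using Suc by (simp add: Gam_def)
  qed
qed

lemma B_eq: "qBernoulli v q m = fact m * (\<Sum>j=0..m. fps_nth Gam j * fps_nth (fps_const (q - 1) * inverse (Den1 q)) (m - j))"
proof -
  have D0: "fps_nth (Den1 q) 0 \<noteq> 0" using q1 by (simp add: Den1_def)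
  have "qBernoulli_gf v q = (fps_const (q - 1) + fps_const ((q - 1) / LL) * fps_X) * inverse (Den1 q)"
    unfolding qBernoulli_gf_def LL_def Den1_def[symmetric] by (rule fps_divide_unit[OF D0])
  also have "\<dots> = Gam * (fps_const (q - 1) * inverse (Den1 q))"
  proof -
    have e1: "fps_const ((q - 1) / LL) = fps_const (inverse LL) * fps_const (q - 1)"
    proof -
      have "(q - 1) / LL = inverse LL * (q - 1)" by (simp add: divide_inverse mult.commute)
      then show ?thesis by simp
    qed
    have gen: "(a + (b * a) * X) * H = (1 + b * X) * (a * H)" for a b X H :: "'a fps"
      by (simp add: algebra_simps)
    show ?thesis unfolding e1 Gam_def by (rule gen)
  qed
  finally have eq: "qBernoulli_gf v q = Gam * (fps_const (q - 1) * inverse (Den1 q))" .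
  show ?thesis unfolding qBernoulli_def eq
    by (rule arg_cong[where f="\<lambda>x. fact m * x"], rule fps_mult_nth)
qed

lemma J_tends: "vtends v (\<lambda>N. (1 / qnum q (p ^ N)) * (\<Sum>x<p ^ N. of_nat x ^ m * q ^ x)) (qBernoulli v q m)"
proof -
  obtain N0 where N0: "\<forall>N\<ge>N0. q ^ (p ^ N) \<noteq> 1 \<and> T N \<noteq> 0" using ev_qM by blast
  show ?thesis
  proof (rule vt_cong_ev[of N0])
    fix N assume "N \<ge> N0"
    then show "(1 / qnum q (p ^ N)) * (\<Sum>x<p ^ N. of_nat x ^ m * q ^ x)
       = fact m * (\<Sum>j=0..m. cc N j * fps_nth (fps_const (q - 1) * inverse (Den1 q)) (m - j))"
      unfolding cc_def using N0 by (intro J_eq q1) simp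
  next
    show "vtends v (\<lambda>N. fact m * (\<Sum>j=0..m. cc N j * fps_nth (fps_const (q - 1) * inverse (Den1 q)) (m - j)))
        (qBernoulli v q m)"
      unfolding B_eq by (intro vt_mult vt_const vt_sum cc_tends) simp
  qed
qed


lemma sum_rearr:
  fixes c d :: "'a::field_char_0" and a b :: "nat \<Rightarrow> 'a" and f :: "nat \<Rightarrow> nat \<Rightarrow> 'a"
  shows "d * (\<Sum>x<M. \<Sum>m=0..n. c * (a m * f m x * b m)) = c * (\<Sum>m=0..n. a m * (d * (\<Sum>x<M. f m x)) * b m)"
proof -
  have "(\<Sum>x<M. \<Sum>m=0..n. c * (a m * f m x * b m)) = (\<Sum>m=0..n. \<Sum>x<M. c * (a m * f m x * b m))"
    by (rule sum.swap)
  also have "\<dots> = (\<Sum>m=0..n. c * (a m * (\<Sum>x<M. f m x) * b m))"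
    by (rule sum.cong) (simp_all add: sum_distrib_left sum_distrib_right mult_ac)
  finally show ?thesis by (simp add: sum_distrib_left mult_ac)
qed

lemma half_pow: "((y::'a::field_char_0) / 2) ^ m = (1 / 2) ^ m * y ^ m"
  by (simp add: power_divide)

lemma integral:
  "has_q_integral p v q (\<lambda>x. (of_nat x / 2) gchoose n)
     ((1 / fact n) * (\<Sum>m=0..n. (1/2) ^ m * qBernoulli v q m * of_int (Stirling1 n m)))"
proof -
  have seq: "(1 / qnum q M) * (\<Sum>x<M. ((of_nat x / 2) gchoose n) * q ^ x)
     = (1 / fact n) * (\<Sum>m=0..n. (1/2) ^ m * ((1 / qnum q M) * (\<Sum>x<M. of_nat x ^ m * q ^ x)) * of_int (Stirling1 n m))"
    for M
  proof -
    have "(\<Sum>x<M. ((of_nat x / 2) gchoose n) * q ^ x)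
       = (\<Sum>x<M. \<Sum>m=0..n. (1 / fact n) * ((1/2) ^ m * (of_nat x ^ m * q ^ x) * of_int (Stirling1 n m)))"
    proof (rule sum.cong[OF refl])
      fix x assume "x \<in> {..<M}"
      have "((of_nat x / 2) gchoose n) * q ^ x
          = (\<Sum>m=0..n. (1 / fact n) * (of_int (Stirling1 n m) * (of_nat x / 2) ^ m) * q ^ x)"
        unfolding gchoose_expand by (simp only: sum_distrib_left sum_distrib_right)
      also have "\<dots> = (\<Sum>m=0..n. (1 / fact n) * ((1/2) ^ m * (of_nat x ^ m * q ^ x) * of_int (Stirling1 n m)))"
        by (rule sum.cong[OF refl]) (simp only: half_pow[of "of_nat x"] mult_ac)
      finally show "((of_nat x / 2) gchoose n) * q ^ x
          = (\<Sum>m=0..n. (1 / fact n) * ((1/2) ^ m * (of_nat x ^ m * q ^ x) * of_int (Stirling1 n m)))" .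
    qed
    then show ?thesis by (simp only:) (rule sum_rearr)
  qed
  have "vtends v (\<lambda>N. (1 / fact n) * (\<Sum>m=0..n. (1/2) ^ m * ((1 / qnum q (p ^ N)) * (\<Sum>x<p ^ N. of_nat x ^ m * q ^ x)) * of_int (Stirling1 n m)))
     ((1 / fact n) * (\<Sum>m=0..n. (1/2) ^ m * qBernoulli v q m * of_int (Stirling1 n m)))"
  proof (rule vt_mult[OF vt_const], rule vt_sum)
    fix m
    show "vtends v (\<lambda>N. (1/2) ^ m * ((1 / qnum q (p ^ N)) * (\<Sum>x<p ^ N. of_nat x ^ m * q ^ x)) * of_int (Stirling1 n m))
        ((1/2) ^ m * qBernoulli v q m * of_int (Stirling1 n m))"
      by (rule vt_mult[OF vt_mult[OF vt_const J_tends] vt_const])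
  qed simp
  then show ?thesis unfolding has_q_integral_def seq .
qed

end

theorem corollary3:
  fixes p :: nat and v :: "'a::field_char_0 \<Rightarrow> real" and q :: 'a and n :: nat
  assumes "prime p" and "odd p"
    and "is_Cp p v"
    and "v (1 - q) < real p powr (- 1 / (real p - 1))"
    and "q \<noteq> 1"
  shows "has_q_integral p v q (\<lambda>x. (of_nat x / 2) gchoose n)
           ((-1) ^ n * (1 / 2 ^ (2 * n)) * dq v q n)
       \<and> (-1) ^ n * (1 / 2 ^ (2 * n)) * dq v q n
           = (1 / fact n) * (\<Sum>m=0..n. (1/2) ^ m * qBernoulli v q m * of_int (Stirling1 n m))"
proof -
  interpret vq p v q
    by unfold_locales (use assms in auto)
  have E: "(-1) ^ n * (1 / 2 ^ (2 * n)) * dq v q n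
           = (1 / fact n) * (\<Sum>m=0..n. (1/2) ^ m * qBernoulli v q m * of_int (Stirling1 n m))"
    by (rule second_eq[OF assms(5)])
  show ?thesis
  proof (rule conjI)
    show "has_q_integral p v q (\<lambda>x. (of_nat x / 2) gchoose n) ((-1) ^ n * (1 / 2 ^ (2 * n)) * dq v q n)"
      unfolding E by (rule integral)
  qed (rule E)
qed

end
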